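(* Let $\mathbf{x} \in \Omega$ be fixed, let $S_{\mathbf{x}} \subseteq S$ be the set of values occurring in $\mathbf{x}$, and suppose $G, G' \in \mathcal{F}$ agree both cumulatively and pointwise on $S_{\mathbf{x}}$. Let $\mathbf{Y}$ be a sample of $n$ i.i.d. draws with order statistics $Y_{(1)} \le \dots \le Y_{(n)}$. Then for every $i \in \{1,\dots,n\}$, $$P_G[x_{(i)} = Y_{(i)} \mid Y_{(j)} = x_{(j)}\ \forall j < i] = P_{G'}[x_{(i)} = Y_{(i)} \mid Y_{(j)} = x_{(j)}\ \forall j < i]$$ and $$P_G[x_{(i)} < Y_{(i)} \mid Y_{(j)} = x_{(j)}\ \forall j < i] = P_{G'}[x_{(i)} < Y_{(i)} \mid Y_{(j)} = x_{(j)}\ \forall j < i],$$ where for $i = 1$ the conditioning is vacuous (unconditional probabilities), and for $i \ge 2$ the conditioning event is assumed to have positive probability under $G$ and under $G'$.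
   Context: $S \subset \mathbb{R}$ is a finite set, $\mathcal{F}$ the set of probability distributions on $S$, and $\Omega$ the set of samples of size $n$ with entries in $S$, identified with their sorted versions $x_{(1)} \le \dots \le x_{(n)}$. $P_H$ denotes probability when the entries of $\mathbf{Y}$ are i.i.d. with distribution $H$. For $C \subseteq S$, $G,G'$ agree pointwise on $C$ if $P_G[X = s] = P_{G'}[X = s]$ for all $s \in C$, and cumulatively on $C$ if $P_G[X \le s] = P_{G'}[X \le s]$ for all $s \in C$, where $X$ is a single draw. *)

theory Defs
  imports "HOL-Probability.Probability"
begin

definition ord_stat :: "real list \<Rightarrow> nat \<Rightarrow> real" where
  "ord_stat ys i = sort ys ! (i - 1)"

definition sample_pmf :: "nat \<Rightarrow> real pmf \<Rightarrow> real list pmf" where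
  "sample_pmf n H = replicate_pmf n H"

definition prefix_event :: "real list \<Rightarrow> nat \<Rightarrow> real list set" where
  "prefix_event xs i = {ys. \<forall>j\<in>{1..<i}. ord_stat ys j = ord_stat xs j}"

definition cond_prob :: "'a pmf \<Rightarrow> 'a set \<Rightarrow> 'a set \<Rightarrow> real" where
  "cond_prob p A B = measure_pmf.prob p (A \<inter> B) / measure_pmf.prob p B"

end

theory Submission imports Defs begin

lemma sort_map_mono:
  fixes f :: "real \<Rightarrow> nat"
  assumes "mono f"
  shows "sort (map f ys) = map f (sort ys)"
proof (rule properties_for_sort)
  show "mset (map f (sort ys)) = mset (map f ys)" by simp
  have "sorted (sort ys)" by simp
  then show "sorted (map f (sort ys))"
    using assms by (simp add: sorted_map sorted_wrt_mono_rel[of _ "(\<le>)"] monoD)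
qed

lemma map_replicate_pmf:
  "map_pmf (map f) (replicate_pmf n p) = replicate_pmf n (map_pmf f p)"
proof (induction n)
  case (Suc n)
  show ?case by (simp add: Suc.IH[symmetric] map_bind_pmf bind_map_pmf)
qed simp

lemma transfer_prob:
  assumes "map_pmf \<phi> G = map_pmf \<phi> G'"
    and "\<And>ys. length ys = n \<Longrightarrow> (ys \<in> E \<longleftrightarrow> map \<phi> ys \<in> E')"
  shows "measure_pmf.prob (replicate_pmf n G) E = measure_pmf.prob (replicate_pmf n G') E"
proof -
  have *: "measure_pmf.prob (replicate_pmf n H) E = measure_pmf.prob (replicate_pmf n (map_pmf \<phi> H)) E'" for H
  proof -
    have "E \<inter> set_pmf (replicate_pmf n H) = map \<phi> -` E' \<inter> set_pmf (replicate_pmf n H)"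
      using assms(2) by (auto simp: set_replicate_pmf)
    then have "measure_pmf.prob (replicate_pmf n H) E = measure_pmf.prob (replicate_pmf n H) (map \<phi> -` E')"
      by (metis measure_Int_set_pmf)
    also have "\<dots> = measure_pmf.prob (map_pmf (map \<phi>) (replicate_pmf n H)) E'" by simp
    finally show ?thesis by (simp add: map_replicate_pmf)
  qed
  show ?thesis using *[of G] *[of G'] assms(1) by simp
qed

definition cl :: "real set \<Rightarrow> real \<Rightarrow> nat" where "cl X t = card {s\<in>X. s < t}"
definition cle :: "real set \<Rightarrow> real \<Rightarrow> nat" where "cle X t = card {s\<in>X. s \<le> t}"
definition phi :: "real set \<Rightarrow> real \<Rightarrow> nat" where "phi X t = cle X t + cl X t"

lemma cl_mono: "finite X \<Longrightarrow> t \<le> u \<Longrightarrow> cl X t \<le> cl X u"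
  unfolding cl_def by (rule card_mono) auto
lemma cle_mono: "finite X \<Longrightarrow> t \<le> u \<Longrightarrow> cle X t \<le> cle X u"
  unfolding cle_def by (rule card_mono) auto
lemma cle_le_cl: "finite X \<Longrightarrow> t < u \<Longrightarrow> cle X t \<le> cl X u"
  unfolding cle_def cl_def by (rule card_mono) auto
lemma cle_cl: assumes fin: "finite X" shows "cle X t = cl X t + (if t \<in> X then 1 else 0)"
proof (cases "t \<in> X")
  case True
  then have "{s\<in>X. s \<le> t} = insert t {s\<in>X. s < t}" by auto
  then show ?thesis using True fin by (simp add: cle_def cl_def)
next
  case False
  then have "{s\<in>X. s \<le> t} = {s\<in>X. s < t}" by (auto simp: order_le_less)
  then show ?thesis using False by (simp add: cle_def cl_def)
qed

lemma phi_mono: "finite X \<Longrightarrow> mono (phi X)"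
  by (auto intro!: monoI add_mono cl_mono cle_mono simp: phi_def)

lemma phi_less1: "finite X \<Longrightarrow> a \<in> X \<Longrightarrow> t < a \<Longrightarrow> phi X t < phi X a"
  using cle_le_cl[of X t a] cl_mono[of X t a] cle_cl[of X a] by (simp add: phi_def)
lemma phi_less2: "finite X \<Longrightarrow> a \<in> X \<Longrightarrow> a < t \<Longrightarrow> phi X a < phi X t"
  using cle_le_cl[of X a t] cle_mono[of X a t] cle_cl[of X a] by (simp add: phi_def)

lemma phi_eq_iff: "finite X \<Longrightarrow> a \<in> X \<Longrightarrow> phi X t = phi X a \<longleftrightarrow> t = a"
  by (metis linorder_neq_iff nat_neq_iff phi_less1 phi_less2)
lemma phi_less_iff: "finite X \<Longrightarrow> a \<in> X \<Longrightarrow> phi X a < phi X t \<longleftrightarrow> a < t"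
  by (metis linorder_not_le order.strict_iff_order phi_less2 phi_mono monoD leD)

lemma cl_surj:
  assumes "finite X" "k < card X"
  shows "\<exists>s\<in>X. cl X s = k"
proof -
  have inj: "inj_on (cl X) X"
  proof (rule inj_onI)
    fix a b assume "a \<in> X" "b \<in> X" "cl X a = cl X b"
    then show "a = b"
      using cle_le_cl[of X a b] cle_le_cl[of X b a] cle_cl[of X a] cle_cl[of X b] assms(1)
      by (metis add_le_same_cancel1 linorder_neq_iff zero_neq_one not_one_le_zero)
  qed
  have sub: "cl X ` X \<subseteq> {0..<card X}"
  proof
    fix k assume "k \<in> cl X ` X"
    then obtain s where s: "s \<in> X" "k = cl X s" by auto
    have "{x\<in>X. x < s} \<subset> X" using s by auto
    then have "card {x\<in>X. x < s} < card X" by (rule psubset_card_mono[OF assms(1)])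
    then show "k \<in> {0..<card X}" using s by (simp add: cl_def)
  qed
  have "card (cl X ` X) = card {0..<card X}" using card_image[OF inj] by simp
  then have "cl X ` X = {0..<card X}" using card_subset_eq[OF _ sub] by simp
  then have "k \<in> cl X ` X" using assms(2) by simp
  then show ?thesis by blast
qed

lemma down_cl:
  assumes "finite X"
  shows "{t. cl X t \<le> k} = UNIV \<or> (\<exists>s\<in>X. {t. cl X t \<le> k} = {t. t \<le> s})"
proof (cases "k < card X")
  case True
  then obtain s where s: "s \<in> X" "cl X s = k" using cl_surj assms by blast
  have "cl X t \<le> k \<longleftrightarrow> t \<le> s" for t
  proof
    assume "t \<le> s" then show "cl X t \<le> k" using cl_mono[OF assms] s by metis
  next
    assume "cl X t \<le> k"
    moreover have "s < t \<Longrightarrow> cl X t > k"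
      using cle_le_cl[OF assms, of s t] cle_cl[OF assms, of s] s by simp
    ultimately show "t \<le> s" by force
  qed
  then show ?thesis using s by blast
next
  case False
  have "cl X t \<le> card X" for t unfolding cl_def by (rule card_mono[OF assms]) auto
  then show ?thesis using False by (metis (mono_tags) UNIV_eq_I le_trans mem_Collect_eq not_le less_imp_le)
qed

lemma down_cle:
  assumes "finite X"
  shows "{t. cle X t \<le> k} = UNIV \<or> (\<exists>s\<in>X. {t. cle X t \<le> k} = {t. t < s})"
proof (cases "k < card X")
  case True
  then obtain s where s: "s \<in> X" "cl X s = k" using cl_surj assms by blast
  have "cle X t \<le> k \<longleftrightarrow> t < s" for t
  proof
    assume "t < s" then show "cle X t \<le> k" using cle_le_cl[OF assms] s by metis
  next
    assume "cle X t \<le> k"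
    moreover have "s \<le> t \<Longrightarrow> cle X t > k"
      using cle_mono[OF assms, of s t] cle_cl[OF assms, of s] s by simp
    ultimately show "t < s" by force
  qed
  then show ?thesis using s by blast
next
  case False
  have "cle X t \<le> card X" for t unfolding cle_def by (rule card_mono[OF assms]) auto
  then show ?thesis using False by (metis (mono_tags) UNIV_eq_I le_trans mem_Collect_eq not_le less_imp_le)
qed

lemma phi_le_iff:
  assumes "finite X"
  shows "{t. phi X t \<le> m} = (if even m then {t. cle X t \<le> m div 2} else {t. cl X t \<le> m div 2})"
  using cle_cl[OF assms] by (auto simp: phi_def split: if_splits) presburger+

lemma prob_less: "measure_pmf.prob G {t. t < (s::real)} = measure_pmf.prob G {t. t \<le> s} - pmf G s"
proof -
  have "{t. t < s} = {t. t \<le> s} - {s}" by auto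
  then show ?thesis by (simp add: measure_pmf.finite_measure_Diff measure_pmf_single)
qed

lemma push_eq:
  assumes fin: "finite X"
    and pw: "\<forall>s\<in>X. pmf G s = pmf G' s"
    and cu: "\<forall>s\<in>X. measure_pmf.prob G {t. t \<le> s} = measure_pmf.prob G' {t. t \<le> s}"
  shows "map_pmf (phi X) G = map_pmf (phi X) G'"
proof -
  have le: "measure_pmf.prob G {t. phi X t \<le> m} = measure_pmf.prob G' {t. phi X t \<le> m}" for m
  proof (cases "even m")
    case True
    then show ?thesis using down_cle[OF fin, of "m div 2"] phi_le_iff[OF fin, of m] pw cu
      by (auto simp: prob_less)
  next
    case False
    then show ?thesis using down_cl[OF fin, of "m div 2"] phi_le_iff[OF fin, of m] pw cu
      by auto
  qed
  show ?thesis
  proof (rule pmf_eqI)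
    fix m
    show "pmf (map_pmf (phi X) G) m = pmf (map_pmf (phi X) G') m"
    proof (cases m)
      case 0
      have "phi X -` {m} = {t. phi X t \<le> 0}" using 0 by auto
      then show ?thesis using le[of 0] by (simp add: pmf_map)
    next
      case (Suc k)
      have e: "phi X -` {m} = {t. phi X t \<le> Suc k} - {t. phi X t \<le> k}" using Suc by auto
      have "measure_pmf.prob H (phi X -` {m}) = measure_pmf.prob H {t. phi X t \<le> Suc k} - measure_pmf.prob H {t. phi X t \<le> k}" for H
        unfolding e by (rule measure_pmf.finite_measure_Diff) auto
      then show ?thesis using le[of k] le[of "Suc k"] by (simp add: pmf_map)
    qed
  qed
qed

lemma sort_phi_nth:
  assumes "finite X" "1 \<le> j" "j \<le> length ys"
  shows "sort (map (phi X) ys) ! (j - 1) = phi X (ord_stat ys j)"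
  using assms by (simp add: sort_map_mono phi_mono ord_stat_def)

lemma ord_stat_in:
  assumes "1 \<le> j" "j \<le> length xs"
  shows "ord_stat xs j \<in> set xs"
proof -
  have "sort xs ! (j - 1) \<in> set (sort xs)" using assms by (intro nth_mem) simp
  then show ?thesis by (simp add: ord_stat_def)
qed

theorem lemma10:
  fixes S :: "real set" and n :: nat and xs :: "real list" and G G' :: "real pmf" and i :: nat
  assumes "finite S"
    and "set_pmf G \<subseteq> S" and "set_pmf G' \<subseteq> S"
    and "length xs = n" and "set xs \<subseteq> S"
    and pointwise: "\<forall>s\<in>set xs. pmf G s = pmf G' s"
    and cumulative: "\<forall>s\<in>set xs. measure_pmf.prob G {t. t \<le> s} = measure_pmf.prob G' {t. t \<le> s}"
    and "1 \<le> i" and "i \<le> n"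
    and "i \<ge> 2 \<longrightarrow> measure_pmf.prob (sample_pmf n G) (prefix_event xs i) > 0
                  \<and> measure_pmf.prob (sample_pmf n G') (prefix_event xs i) > 0"
  shows "cond_prob (sample_pmf n G) {ys. ord_stat xs i = ord_stat ys i} (prefix_event xs i)
         = cond_prob (sample_pmf n G') {ys. ord_stat xs i = ord_stat ys i} (prefix_event xs i)
       \<and> cond_prob (sample_pmf n G) {ys. ord_stat xs i < ord_stat ys i} (prefix_event xs i)
         = cond_prob (sample_pmf n G') {ys. ord_stat xs i < ord_stat ys i} (prefix_event xs i)"
proof -
  define X where "X = set xs"
  have fin: "finite X" by (simp add: X_def)
  have push: "map_pmf (phi X) G = map_pmf (phi X) G'"
    using push_eq[OF fin] pointwise cumulative by (simp add: X_def)
  have inX: "ord_stat xs j \<in> X" if "1 \<le> j" "j \<le> n" for j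
    using ord_stat_in[of j xs] that assms(4) by (simp add: X_def)
  define B' where "B' = {zs. \<forall>j\<in>{1..<i}. sort zs ! (j - 1) = phi X (ord_stat xs j)}"
  define A' where "A' = {zs. phi X (ord_stat xs i) = sort zs ! (i - 1)}"
  define C' where "C' = {zs. phi X (ord_stat xs i) < sort zs ! (i - 1)}"
  have B: "ys \<in> prefix_event xs i \<longleftrightarrow> map (phi X) ys \<in> B'" if "length ys = n" for ys
  proof -
    have "sort (map (phi X) ys) ! (j - 1) = phi X (ord_stat xs j) \<longleftrightarrow> ord_stat ys j = ord_stat xs j"
      if "j \<in> {1..<i}" for j
      using sort_phi_nth[OF fin, of j ys] phi_eq_iff[OF fin inX[of j]] that \<open>length ys = n\<close> assms(9)
      by auto
    then show ?thesis by (auto simp: prefix_event_def B'_def)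
  qed
  have A: "ys \<in> {ys. ord_stat xs i = ord_stat ys i} \<longleftrightarrow> map (phi X) ys \<in> A'" if "length ys = n" for ys
    using sort_phi_nth[OF fin, of i ys] phi_eq_iff[OF fin inX[of i], of "ord_stat ys i"] that assms(8,9)
    unfolding A'_def by (simp add: eq_commute[of "ord_stat xs i"]) (metis)
  have C: "ys \<in> {ys. ord_stat xs i < ord_stat ys i} \<longleftrightarrow> map (phi X) ys \<in> C'" if "length ys = n" for ys
    using sort_phi_nth[OF fin, of i ys] phi_less_iff[OF fin inX[of i]] that assms(8,9)
    by (auto simp: C'_def)
  have PB: "measure_pmf.prob (sample_pmf n G) (prefix_event xs i) = measure_pmf.prob (sample_pmf n G') (prefix_event xs i)"
    unfolding sample_pmf_def by (rule transfer_prob[OF push B])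
  have PA: "measure_pmf.prob (sample_pmf n G) ({ys. ord_stat xs i = ord_stat ys i} \<inter> prefix_event xs i)
      = measure_pmf.prob (sample_pmf n G') ({ys. ord_stat xs i = ord_stat ys i} \<inter> prefix_event xs i)"
    unfolding sample_pmf_def by (rule transfer_prob[OF push, where E'="A' \<inter> B'"]) (use A B in auto)
  have PC: "measure_pmf.prob (sample_pmf n G) ({ys. ord_stat xs i < ord_stat ys i} \<inter> prefix_event xs i)
      = measure_pmf.prob (sample_pmf n G') ({ys. ord_stat xs i < ord_stat ys i} \<inter> prefix_event xs i)"
    unfolding sample_pmf_def by (rule transfer_prob[OF push, where E'="C' \<inter> B'"]) (use C B in auto)
  show ?thesis using PA PB PC by (simp add: cond_prob_def)
qed

end
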